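(* Let $f\in\mathcal{E}$ have infinite order. Then exactly one of the following holds: (a) all fundamental discontinuities of $f$ are eventually resolving, in which case $d(f^n)$ is bounded independently of $n$; (b) $f$ has $k\geq 1$ nonresolving fundamental discontinuities, in which case $d(f^n)$ has linear growth on the order of $k|n|$ (i.e. $d(f^n)/|n|\to k$ as $|n|\to\infty$).
   Context: Identify $\mathbb{T}^1=\mathbb{R}/\mathbb{Z}$ with $[0,1)$. An interval exchange transformation is a bijection $f:\mathbb{T}^1\to\mathbb{T}^1$ for which there is a partition of $[0,1)$ into finitely many half-open intervals $[a,b)$ on each of which $f$ is a translation $x\mapsto x+c\pmod 1$; such maps are right-continuous. $\mathcal{E}$ is the group of interval exchanges. $D(f)$ is the (finite) set of points where $f$ is discontinuous as a map of the circle $\mathbb{T}^1$, and $d(f)=|D(f)|$. $\mathrm{Per}(f)$ is the set of periodic points, and $D_{np}(f)=D(f)\setminus\mathrm{Per}(f)$. A point $x\in D_{np}(f)$ is a fundamental discontinuity if $f$ is continuous at $f^{-i}(x)$ for all $i\geq 1$. Let $f_-$ be the left-continuous version of $f$ ($f_-(x)=\lim_{y\to x^-}f(y)$) and $f_+=f$. The stabilization time of $f$ is the smallest positive integer $n_0$ such that $f$ is continuous at $f_+^n(x)$ and $f_-^n(x)$ for all $n\geq n_0$ and all fundamental discontinuities $x$. A fundamental discontinuity $x$ is eventually resolving if $f_+^{n_0}(x)=f_-^{n_0}(x)$ (then $f_+^n(x)=f_-^n(x)$ for all $n\ge n_0$), and nonresolving otherwise (then $f_+^n(x)\neq f_-^n(x)$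 for all $n\ge n_0$). *)

theory Defs
  imports Complex_Main
begin

text \<open>The circle T^1 = R/Z is identified with [0,1). A self-map of the circle is
represented by a function real => real of which only the values on [0,1) matter.\<close>

definition circ_dist :: "real \<Rightarrow> real \<Rightarrow> real" where
  "circ_dist a b = min (frac (a - b)) (frac (b - a))"

definition iet :: "(real \<Rightarrow> real) \<Rightarrow> bool" where
  "iet f \<longleftrightarrow> bij_betw f {0..<1} {0..<1} \<and>
     (\<exists>A. finite A \<and> 0 \<in> A \<and> A \<subseteq> {0..<1} \<and>
        (\<forall>a\<in>A. \<exists>c. \<forall>x. a \<le> x \<and> x < 1 \<and> (\<forall>b\<in>A. a < b \<longrightarrow> x < b)
                        \<longrightarrow> f x = frac (x + c)))"

definition ipow :: "(real \<Rightarrow> real) \<Rightarrow> int \<Rightarrow> (real \<Rightarrow> real)" where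
  "ipow f n = (if n \<ge> 0 then f ^^ nat n else (inv_into {0..<1} f) ^^ nat (- n))"

definition circ_cont :: "(real \<Rightarrow> real) \<Rightarrow> real \<Rightarrow> bool" where
  "circ_cont g x \<longleftrightarrow>
     (\<forall>e>0. \<exists>d>0. \<forall>y. \<bar>y - x\<bar> < d \<longrightarrow> circ_dist (g (frac y)) (g x) < e)"

definition disc :: "(real \<Rightarrow> real) \<Rightarrow> real set" where
  "disc g = {x \<in> {0..<1}. \<not> circ_cont g x}"

definition dnum :: "(real \<Rightarrow> real) \<Rightarrow> nat" where
  "dnum g = card (disc g)"

definition per :: "(real \<Rightarrow> real) \<Rightarrow> real set" where
  "per f = {x \<in> {0..<1}. \<exists>n>0. (f ^^ n) x = x}"

definition disc_np :: "(real \<Rightarrow> real) \<Rightarrow> real set" where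
  "disc_np f = disc f - per f"

definition fundamental :: "(real \<Rightarrow> real) \<Rightarrow> real \<Rightarrow> bool" where
  "fundamental f x \<longleftrightarrow> x \<in> disc_np f \<and>
     (\<forall>i\<ge>1. circ_cont f ((inv_into {0..<1} f ^^ i) x))"

definition left_version :: "(real \<Rightarrow> real) \<Rightarrow> real \<Rightarrow> real" where
  "left_version f x = (THE v. v \<in> {0..<1} \<and>
     (\<forall>e>0. \<exists>d>0. \<forall>y. x - d < y \<and> y < x \<longrightarrow> circ_dist (f (frac y)) v < e))"

definition stab_time :: "(real \<Rightarrow> real) \<Rightarrow> nat" where
  "stab_time f = (LEAST n0. n0 > 0 \<and> (\<forall>n\<ge>n0. \<forall>x. fundamental f x \<longrightarrow>
       circ_cont f ((f ^^ n) x) \<and> circ_cont f ((left_version f ^^ n) x)))"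

definition eventually_resolving :: "(real \<Rightarrow> real) \<Rightarrow> real \<Rightarrow> bool" where
  "eventually_resolving f x \<longleftrightarrow> fundamental f x \<and>
     (f ^^ stab_time f) x = (left_version f ^^ stab_time f) x"

definition nonresolving :: "(real \<Rightarrow> real) \<Rightarrow> real \<Rightarrow> bool" where
  "nonresolving f x \<longleftrightarrow> fundamental f x \<and>
     (f ^^ stab_time f) x \<noteq> (left_version f ^^ stab_time f) x"

end

theory Submission
  imports Defs
begin


lemma cd_le: "circ_dist u v \<le> \<bar>u - v - of_int k\<bar>"
proof (cases "u - v - of_int k \<ge> 0")
  case True
  hence "k \<le> \<lfloor>u - v\<rfloor>" by (simp add: le_floor_iff)
  hence "frac (u - v) \<le> u - v - of_int k" by (simp add: frac_def)
  thus ?thesis using True unfolding circ_dist_def by simp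
next
  case False
  hence "-k \<le> \<lfloor>v - u\<rfloor>" by (simp add: le_floor_iff)
  hence "frac (v - u) \<le> v - u + of_int k" by (simp add: frac_def)
  thus ?thesis using False unfolding circ_dist_def by simp
qed

lemma cd_ex: "\<exists>k. circ_dist u v = \<bar>u - v - of_int k\<bar>"
proof (cases "frac (u - v) \<le> frac (v - u)")
  case True
  hence "circ_dist u v = \<bar>u - v - of_int \<lfloor>u - v\<rfloor>\<bar>"
    unfolding circ_dist_def by (simp add: frac_def)
  thus ?thesis by blast
next
  case False
  have n: "v - u - of_int \<lfloor>v - u\<rfloor> \<ge> 0" by linarith
  have "circ_dist u v = frac (v - u)" using False unfolding circ_dist_def by simp
  also have "\<dots> = \<bar>u - v - of_int (- \<lfloor>v - u\<rfloor>)\<bar>"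
    using n unfolding frac_def of_int_minus by linarith
  finally have "circ_dist u v = \<bar>u - v - of_int (- \<lfloor>v - u\<rfloor>)\<bar>" .
  thus ?thesis by blast
qed

lemma cd_nonneg: "circ_dist u v \<ge> 0"
  unfolding circ_dist_def by simp

lemma cd_sym: "circ_dist u v = circ_dist v u"
  unfolding circ_dist_def by simp

lemma cd_abs: "circ_dist u v \<le> \<bar>u - v\<bar>"
  using cd_le[of u v 0] by simp

lemma cd_tri: "circ_dist u w \<le> circ_dist u v + circ_dist v w"
proof -
  obtain k1 where k1: "circ_dist u v = \<bar>u - v - of_int k1\<bar>" using cd_ex by blast
  obtain k2 where k2: "circ_dist v w = \<bar>v - w - of_int k2\<bar>" using cd_ex by blast
  have "circ_dist u w \<le> \<bar>u - w - of_int (k1 + k2)\<bar>" by (rule cd_le)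
  also have "\<dots> \<le> \<bar>u - v - of_int k1\<bar> + \<bar>v - w - of_int k2\<bar>" by simp
  finally show ?thesis using k1 k2 by simp
qed

lemma cd_shift: "u - v = u' - v' + of_int m \<Longrightarrow> circ_dist u v = circ_dist u' v'"
proof -
  assume h: "u - v = u' - v' + of_int m"
  have a: "circ_dist u v \<le> circ_dist u' v'"
    if "u - v = u' - v' + of_int m" for u v u' v' :: real and m
  proof -
    obtain k where k: "circ_dist u' v' = \<bar>u' - v' - of_int k\<bar>" using cd_ex by blast
    have "circ_dist u v \<le> \<bar>u - v - of_int (k + m)\<bar>" by (rule cd_le)
    thus ?thesis using k that by simp
  qed
  show ?thesis using a[OF h] a[of u' v' u v "-m"] h by force
qed

lemma cd_frac1: "circ_dist (frac a) b = circ_dist a b"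
  by (rule cd_shift[of _ _ _ _ "- \<lfloor>a\<rfloor>"]) (simp add: frac_def)

lemma cd_frac2: "circ_dist a (frac b) = circ_dist a b"
  by (rule cd_shift[of _ _ _ _ "\<lfloor>b\<rfloor>"]) (simp add: frac_def)

lemma cd_ff: "circ_dist (frac a) (frac b) \<le> \<bar>a - b\<bar>"
  using cd_abs[of a b] by (simp add: cd_frac1 cd_frac2)

lemma cd_zero: "u \<in> {0..<1} \<Longrightarrow> v \<in> {0..<1} \<Longrightarrow> circ_dist u v = 0 \<Longrightarrow> u = v"
proof -
  assume u: "u \<in> {0..<1}" and v: "v \<in> {0..<1}" and z: "circ_dist u v = 0"
  obtain k where k: "0 = \<bar>u - v - of_int k\<bar>" using cd_ex z by metis
  hence "of_int k = u - v" by simp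
  hence "\<bar>of_int k\<bar> < (1::real)" using u v by auto
  hence "k = 0" by linarith
  thus ?thesis using \<open>of_int k = u - v\<close> by simp
qed

lemma cd_approx: "u \<in> {0..<1} \<Longrightarrow> v \<in> {0..<1} \<Longrightarrow> (\<And>e. e > 0 \<Longrightarrow> circ_dist u v < e) \<Longrightarrow> u = v"
proof -
  assume u: "u \<in> {0..<1}" and v: "v \<in> {0..<1}" and h: "\<And>e. e > 0 \<Longrightarrow> circ_dist u v < e"
  have "circ_dist u v = 0"
  proof (rule ccontr)
    assume "circ_dist u v \<noteq> 0"
    hence "circ_dist u v > 0" using cd_nonneg[of u v] by linarith
    from h[OF this] show False by simp
  qed
  thus ?thesis using cd_zero u v by blast
qed



definition LT :: "(real \<Rightarrow> real) \<Rightarrow> bool" where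
  "LT g \<longleftrightarrow> (\<forall>x\<in>{0..<1}. g x \<in> {0..<1} \<and>
     (\<exists>\<delta>>0. \<exists>c. \<forall>y. x - \<delta> < y \<and> y < x \<longrightarrow> g (frac y) = frac (y + c)) \<and>
     (\<exists>\<delta>>0. \<exists>c. \<forall>y. x \<le> y \<and> y < x + \<delta> \<longrightarrow> g (frac y) = frac (y + c)))"

lemma LT_in: "LT g \<Longrightarrow> x \<in> {0..<1} \<Longrightarrow> g x \<in> {0..<1}"
  unfolding LT_def by blast

lemma LT_left: "LT g \<Longrightarrow> x \<in> {0..<1} \<Longrightarrow>
   \<exists>\<delta>>0. \<exists>c. \<forall>y. x - \<delta> < y \<and> y < x \<longrightarrow> g (frac y) = frac (y + c)"
  unfolding LT_def by blast

lemma LT_right: "LT g \<Longrightarrow> x \<in> {0..<1} \<Longrightarrow>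
   \<exists>\<delta>>0. \<exists>c. \<forall>y. x \<le> y \<and> y < x + \<delta> \<longrightarrow> g (frac y) = frac (y + c)"
  unfolding LT_def by blast

lemma right_val: "x \<in> {0..<1} \<Longrightarrow> \<delta> > 0 \<Longrightarrow> \<forall>y. x \<le> y \<and> y < x + \<delta> \<longrightarrow> g (frac y) = frac (y + c)
  \<Longrightarrow> g x = frac (x + c)"
  by (metis frac_eq_id less_add_same_cancel1 order_refl)

lemma frac_in: "frac a \<in> {0..<1}"
  by (simp add: frac_lt_1)

lemma LV:
  assumes x: "x \<in> {0..<1}" and d: "\<delta> > 0"
    and h: "\<forall>y. x - \<delta> < y \<and> y < x \<longrightarrow> g (frac y) = frac (y + c)"
  shows "left_version g x = frac (x + c)"
  unfolding left_version_def
proof (rule the_equality)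
  show "frac (x + c) \<in> {0..<1} \<and> (\<forall>e>0. \<exists>d>0. \<forall>y. x - d < y \<and> y < x \<longrightarrow>
           circ_dist (g (frac y)) (frac (x + c)) < e)"
  proof (intro conjI allI impI)
    show "frac (x + c) \<in> {0..<1}" by (rule frac_in)
    fix e :: real assume e: "e > 0"
    show "\<exists>d>0. \<forall>y. x - d < y \<and> y < x \<longrightarrow> circ_dist (g (frac y)) (frac (x + c)) < e"
    proof (intro exI[of _ "min \<delta> e"] conjI allI impI)
      show "min \<delta> e > 0" using d e by simp
      fix y assume y: "x - min \<delta> e < y \<and> y < x"
      have "circ_dist (g (frac y)) (frac (x + c)) = circ_dist (frac (y + c)) (frac (x + c))"
        using h y by auto
      also have "\<dots> \<le> \<bar>(y + c) - (x + c)\<bar>" by (rule cd_ff)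
      also have "\<dots> < e" using y by auto
      finally show "circ_dist (g (frac y)) (frac (x + c)) < e" .
    qed
  qed
next
  fix v assume v: "v \<in> {0..<1} \<and> (\<forall>e>0. \<exists>d>0. \<forall>y. x - d < y \<and> y < x \<longrightarrow>
           circ_dist (g (frac y)) v < e)"
  show "v = frac (x + c)"
  proof (rule cd_approx)
    show "v \<in> {0..<1}" using v by blast
    show "frac (x + c) \<in> {0..<1}" by (rule frac_in)
    fix e :: real assume e: "e > 0"
    obtain d where d0: "d > 0" and dd: "\<forall>y. x - d < y \<and> y < x \<longrightarrow> circ_dist (g (frac y)) v < e/2"
      using v e by (meson half_gt_zero)
    define y where "y = x - min (min d \<delta>) (e/2) / 2"
    have yy: "x - d < y \<and> y < x" "x - \<delta> < y" "\<bar>y - x\<bar> < e/2" using d0 d e unfolding y_def by auto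
    have "circ_dist v (frac (x + c)) \<le> circ_dist v (g (frac y)) + circ_dist (g (frac y)) (frac (x + c))"
      by (rule cd_tri)
    also have "circ_dist v (g (frac y)) < e/2" using dd yy cd_sym by metis
    also have "circ_dist (g (frac y)) (frac (x + c)) = circ_dist (frac (y + c)) (frac (x + c))"
      using h yy by simp
    also have "\<dots> \<le> \<bar>(y + c) - (x + c)\<bar>" by (rule cd_ff)
    also have "\<dots> < e/2" using yy by simp
    finally show "circ_dist v (frac (x + c)) < e" by simp
  qed
qed

lemma LV_in: "LT g \<Longrightarrow> x \<in> {0..<1} \<Longrightarrow> left_version g x \<in> {0..<1}"
  using LT_left[of g x] LV[of x _ g] frac_in by metis

lemma cont_iff:
  assumes g: "LT g" and x: "x \<in> {0..<1}"
  shows "circ_cont g x \<longleftrightarrow> left_version g x = g x"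
proof -
  obtain \<delta>1 c where d1: "\<delta>1 > 0" and h1: "\<forall>y. x - \<delta>1 < y \<and> y < x \<longrightarrow> g (frac y) = frac (y + c)"
    using LT_left[OF g x] by blast
  obtain \<delta>2 c' where d2: "\<delta>2 > 0" and h2: "\<forall>y. x \<le> y \<and> y < x + \<delta>2 \<longrightarrow> g (frac y) = frac (y + c')"
    using LT_right[OF g x] by blast
  have lv: "left_version g x = frac (x + c)" by (rule LV[OF x d1 h1])
  have gx: "g x = frac (x + c')" by (rule right_val[OF x d2 h2])
  show ?thesis
  proof
    assume cc: "circ_cont g x"
    show "left_version g x = g x" unfolding lv
    proof (rule cd_approx)
      show "frac (x + c) \<in> {0..<1}" by (rule frac_in)
      show "g x \<in> {0..<1}" using LT_in[OF g x] .
      fix e :: real assume e: "e > 0"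
      obtain d where d0: "d > 0" and dd: "\<forall>y. \<bar>y - x\<bar> < d \<longrightarrow> circ_dist (g (frac y)) (g x) < e/2"
        using cc e unfolding circ_cont_def by (meson half_gt_zero)
      define y where "y = x - min (min d \<delta>1) (e/2) / 2"
      have yy: "\<bar>y - x\<bar> < d" "x - \<delta>1 < y \<and> y < x" "\<bar>y - x\<bar> < e/2" using d0 d1 e unfolding y_def by auto
      have "circ_dist (frac (x + c)) (g x) \<le> circ_dist (frac (x + c)) (g (frac y)) + circ_dist (g (frac y)) (g x)"
        by (rule cd_tri)
      also have "circ_dist (g (frac y)) (g x) < e/2" using dd yy by blast
      also have "circ_dist (frac (x + c)) (g (frac y)) = circ_dist (frac (x + c)) (frac (y + c))"
        using h1 yy by simp
      also have "\<dots> \<le> \<bar>(x + c) - (y + c)\<bar>" by (rule cd_ff)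
      also have "\<dots> < e/2" using yy by simp
      finally show "circ_dist (frac (x + c)) (g x) < e" by simp
    qed
  next
    assume eq: "left_version g x = g x"
    show "circ_cont g x" unfolding circ_cont_def
    proof (intro allI impI)
      fix e :: real assume e: "e > 0"
      show "\<exists>d>0. \<forall>y. \<bar>y - x\<bar> < d \<longrightarrow> circ_dist (g (frac y)) (g x) < e"
      proof (intro exI[of _ "min (min \<delta>1 \<delta>2) e"] conjI allI impI)
        show "min (min \<delta>1 \<delta>2) e > 0" using d1 d2 e by simp
        fix y assume y: "\<bar>y - x\<bar> < min (min \<delta>1 \<delta>2) e"
        show "circ_dist (g (frac y)) (g x) < e"
        proof (cases "y < x")
          case True
          have "circ_dist (g (frac y)) (g x) = circ_dist (frac (y + c)) (frac (x + c))"
            using h1 y True eq lv by auto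
          also have "\<dots> \<le> \<bar>(y + c) - (x + c)\<bar>" by (rule cd_ff)
          finally show ?thesis using y by simp
        next
          case False
          have "circ_dist (g (frac y)) (g x) = circ_dist (frac (y + c')) (frac (x + c'))"
            using h2 y False gx by auto
          also have "\<dots> \<le> \<bar>(y + c') - (x + c')\<bar>" by (rule cd_ff)
          finally show ?thesis using y by simp
        qed
      qed
    qed
  qed
qed

lemma LT_comp:
  assumes g: "LT g" and h: "LT h"
  shows "LT (g \<circ> h) \<and> (\<forall>x\<in>{0..<1}. left_version (g \<circ> h) x = left_version g (left_version h x))"
proof -
  have main: "(g \<circ> h) x \<in> {0..<1} \<and>
     (\<exists>\<delta>>0. \<exists>c. \<forall>y. x - \<delta> < y \<and> y < x \<longrightarrow> (g \<circ> h) (frac y) = frac (y + c)) \<and>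
     (\<exists>\<delta>>0. \<exists>c. \<forall>y. x \<le> y \<and> y < x + \<delta> \<longrightarrow> (g \<circ> h) (frac y) = frac (y + c)) \<and>
     left_version (g \<circ> h) x = left_version g (left_version h x)" if x: "x \<in> {0..<1}" for x
  proof -
    obtain \<delta> c where d: "\<delta> > 0" and hl: "\<forall>y. x - \<delta> < y \<and> y < x \<longrightarrow> h (frac y) = frac (y + c)"
      using LT_left[OF h x] by blast
    define v where "v = frac (x + c)"
    have v: "v \<in> {0..<1}" unfolding v_def by (rule frac_in)
    have lvh: "left_version h x = v" unfolding v_def by (rule LV[OF x d hl])
    obtain \<delta>' e where d': "\<delta>' > 0" and gl: "\<forall>z. v - \<delta>' < z \<and> z < v \<longrightarrow> g (frac z) = frac (z + e)"
      using LT_left[OF g v] by blast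
    have lvg: "left_version g v = frac (v + e)" by (rule LV[OF v d' gl])
    have L: "\<forall>y. x - min \<delta> \<delta>' < y \<and> y < x \<longrightarrow> (g \<circ> h) (frac y) = frac (y + (v - x + e))"
    proof (intro allI impI)
      fix y assume y: "x - min \<delta> \<delta>' < y \<and> y < x"
      have "h (frac y) = frac (y + c)" using hl y by auto
      also have "y + c = (y - x + v) + of_int \<lfloor>x + c\<rfloor>" unfolding v_def frac_def by simp
      finally have "h (frac y) = frac (y - x + v)" by simp
      hence "(g \<circ> h) (frac y) = g (frac (y - x + v))" by simp
      also have "\<dots> = frac (y - x + v + e)" using gl y by auto
      finally show "(g \<circ> h) (frac y) = frac (y + (v - x + e))" by (simp add: algebra_simps)
    qed
    have "left_version (g \<circ> h) x = frac (x + (v - x + e))" by (rule LV[OF x _ L]) (simp add: d d')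
    hence lvc: "left_version (g \<circ> h) x = left_version g (left_version h x)"
      using lvh lvg by (simp add: algebra_simps)
    obtain \<delta>2 c' where d2: "\<delta>2 > 0" and hr: "\<forall>y. x \<le> y \<and> y < x + \<delta>2 \<longrightarrow> h (frac y) = frac (y + c')"
      using LT_right[OF h x] by blast
    define u where "u = frac (x + c')"
    have u: "u \<in> {0..<1}" unfolding u_def by (rule frac_in)
    obtain \<delta>2' e' where d2': "\<delta>2' > 0" and gr: "\<forall>z. u \<le> z \<and> z < u + \<delta>2' \<longrightarrow> g (frac z) = frac (z + e')"
      using LT_right[OF g u] by blast
    have R: "\<forall>y. x \<le> y \<and> y < x + min \<delta>2 \<delta>2' \<longrightarrow> (g \<circ> h) (frac y) = frac (y + (u - x + e'))"
    proof (intro allI impI)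
      fix y assume y: "x \<le> y \<and> y < x + min \<delta>2 \<delta>2'"
      have "h (frac y) = frac (y + c')" using hr y by auto
      also have "y + c' = (y - x + u) + of_int \<lfloor>x + c'\<rfloor>" unfolding u_def frac_def by simp
      finally have "h (frac y) = frac (y - x + u)" by simp
      hence "(g \<circ> h) (frac y) = g (frac (y - x + u))" by simp
      also have "\<dots> = frac (y - x + u + e')" using gr y by auto
      finally show "(g \<circ> h) (frac y) = frac (y + (u - x + e'))" by (simp add: algebra_simps)
    qed
    have "(g \<circ> h) x \<in> {0..<1}" using LT_in[OF g LT_in[OF h x]] by simp
    thus ?thesis using L R lvc d d' d2 d2' by (metis min_less_iff_conj)
  qed
  show ?thesis unfolding LT_def using main by blast
qed

lemma LT_id: "LT id \<and> (\<forall>x\<in>{0..<1}. left_version id x = x)"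
proof -
  have h: "\<forall>y. x - 1 < y \<and> y < x \<longrightarrow> id (frac y) = frac (y + 0)" for x :: real by simp
  have "LT id" unfolding LT_def
  proof
    fix x :: real assume "x \<in> {0..<1}"
    thus "id x \<in> {0..<1} \<and> (\<exists>\<delta>>0. \<exists>c. \<forall>y. x - \<delta> < y \<and> y < x \<longrightarrow> id (frac y) = frac (y + c)) \<and>
     (\<exists>\<delta>>0. \<exists>c. \<forall>y. x \<le> y \<and> y < x + \<delta> \<longrightarrow> id (frac y) = frac (y + c))"
      by (intro conjI exI[of _ 1] exI[of _ 0]) auto
  qed
  moreover have "\<forall>x\<in>{0..<1}. left_version id x = x"
  proof
    fix x :: real assume x: "x \<in> {0..<1}"
    have "left_version id x = frac (x + 0)" by (rule LV[OF x zero_less_one h])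
    thus "left_version id x = x" using x by simp
  qed
  ultimately show ?thesis by blast
qed

lemma LT_pow:
  assumes f: "LT f"
  shows "LT (f ^^ n) \<and> (\<forall>x\<in>{0..<1}. left_version (f ^^ n) x = (left_version f ^^ n) x)"
proof (induction n)
  case 0
  then show ?case unfolding funpow.simps(1) using LT_id by (simp add: id_def)
next
  case (Suc n)
  show ?case unfolding funpow.simps(2) using LT_comp[OF f Suc.IH[THEN conjunct1]] Suc.IH by (simp add: comp_def)
qed



lemma iet_right:
  assumes fin: "finite A" and A0: "0 \<in> A" and AX: "A \<subseteq> {0..<1}"
    and pc: "\<forall>a\<in>A. \<exists>c. \<forall>x. a \<le> x \<and> x < 1 \<and> (\<forall>b\<in>A. a < b \<longrightarrow> x < b) \<longrightarrow> f x = frac (x + c)"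
    and x: "x \<in> {0..<1}"
  shows "\<exists>a\<in>A. a \<le> x \<and> (\<exists>\<delta>>0. \<exists>c. \<forall>y. a \<le> y \<and> y < x + \<delta> \<longrightarrow> y < 1 \<and> f y = frac (y + c))"
proof -
  define S where "S = {a\<in>A. a \<le> x}"
  have Sf: "finite S" "S \<noteq> {}" using fin A0 x unfolding S_def by auto
  define a where "a = Max S"
  have aS: "a \<in> S" unfolding a_def using Sf by simp
  have amax: "\<And>b. b \<in> A \<Longrightarrow> b \<le> x \<Longrightarrow> b \<le> a" unfolding a_def by (rule Max_ge[OF Sf(1)]) (simp add: S_def)
  define R where "R = {b\<in>A. x < b}"
  have Rf: "finite R" using fin unfolding R_def by simp
  define t where "t = (if R = {} then 1 else Min R)"
  have tx1: "x < t" using Rf AX x unfolding t_def R_def by auto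
  have "t \<le> 1"
  proof (cases "R = {}")
    case False
    then obtain b where b: "b \<in> R" by blast
    hence "Min R \<le> b" using Rf by simp
    moreover have "b < 1" using b AX unfolding R_def by auto
    ultimately show ?thesis using False unfolding t_def by simp
  qed (simp add: t_def)
  note tx = tx1 this
  have tb: "\<And>b. b \<in> A \<Longrightarrow> x < b \<Longrightarrow> t \<le> b" using Rf unfolding t_def R_def by auto
  obtain c where c: "\<forall>z. a \<le> z \<and> z < 1 \<and> (\<forall>b\<in>A. a < b \<longrightarrow> z < b) \<longrightarrow> f z = frac (z + c)"
    using pc aS unfolding S_def by blast
  have "\<forall>y. a \<le> y \<and> y < x + (t - x) \<longrightarrow> y < 1 \<and> f y = frac (y + c)"
  proof (intro allI impI)
    fix y assume y: "a \<le> y \<and> y < x + (t - x)"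
    have "\<forall>b\<in>A. a < b \<longrightarrow> y < b"
    proof (intro ballI impI)
      fix b assume b: "b \<in> A" "a < b"
      hence "x < b" using amax by force
      thus "y < b" using tb[OF b(1)] y by simp
    qed
    thus "y < 1 \<and> f y = frac (y + c)" using c y tx by auto
  qed
  moreover have "t - x > 0" using tx by simp
  ultimately show ?thesis using aS unfolding S_def by blast
qed

lemma iet_LT:
  assumes "iet f"
  shows "LT f" and "finite (disc f)"
proof -
  obtain A where fin: "finite A" and A0: "0 \<in> A" and AX: "A \<subseteq> {0..<1}"
    and pc: "\<forall>a\<in>A. \<exists>c. \<forall>x. a \<le> x \<and> x < 1 \<and> (\<forall>b\<in>A. a < b \<longrightarrow> x < b) \<longrightarrow> f x = frac (x + c)"
    using assms unfolding iet_def by blast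
  have bij: "bij_betw f {0..<1} {0..<1}" using assms unfolding iet_def by blast
  have R: "\<exists>\<delta>>0. \<exists>c. \<forall>y. x \<le> y \<and> y < x + \<delta> \<longrightarrow> f (frac y) = frac (y + c)"
    if x: "x \<in> {0..<1}" for x
  proof -
    obtain a \<delta> c where a: "a \<in> A" "a \<le> x" and d: "\<delta> > 0"
      and h: "\<forall>y. a \<le> y \<and> y < x + \<delta> \<longrightarrow> y < 1 \<and> f y = frac (y + c)"
      using iet_right[OF fin A0 AX pc x] by blast
    have "\<forall>y. x \<le> y \<and> y < x + \<delta> \<longrightarrow> f (frac y) = frac (y + c)"
    proof (intro allI impI)
      fix y assume y: "x \<le> y \<and> y < x + \<delta>"
      have "a \<le> y" using a y by linarith
      hence h1: "y < 1 \<and> f y = frac (y + c)" using h y by blast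
      moreover have "frac y = y" using y x h1 by (simp add: frac_eq)
      ultimately show "f (frac y) = frac (y + c)" by simp
    qed
    thus ?thesis using d by blast
  qed
  have L: "\<exists>\<delta>>0. \<exists>c. \<forall>y. x - \<delta> < y \<and> y < x \<longrightarrow> f (frac y) = frac (y + c)"
    if x: "x \<in> {0..<1}" for x
  proof (cases "x = 0")
    case True
    define a where "a = Max A"
    have aA: "a \<in> A" unfolding a_def using fin A0 by (intro Max_in) auto
    have amax: "\<And>b. b \<in> A \<Longrightarrow> b \<le> a" unfolding a_def using fin by (rule Max_ge)
    have a1: "a < 1" using aA AX by auto
    obtain c where c: "\<forall>z. a \<le> z \<and> z < 1 \<and> (\<forall>b\<in>A. a < b \<longrightarrow> z < b) \<longrightarrow> f z = frac (z + c)"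
      using pc aA by blast
    have "\<forall>y. x - (1 - a) < y \<and> y < x \<longrightarrow> f (frac y) = frac (y + (1 + c))"
    proof (intro allI impI)
      fix y assume y: "x - (1 - a) < y \<and> y < x"
      have a0: "0 \<le> a" using aA AX by auto
      have "\<lfloor>y\<rfloor> = -1" using y True a0 by (simp add: floor_eq_iff)
      hence fy: "frac y = y + 1" unfolding frac_def by simp
      have "\<forall>b\<in>A. a < b \<longrightarrow> y + 1 < b"
      proof (intro ballI impI)
        fix b assume "b \<in> A" "a < b"
        with amax[OF this(1)] show "y + 1 < b" by simp
      qed
      moreover have "a \<le> y + 1" "y + 1 < 1" using y True by auto
      ultimately have "f (y + 1) = frac (y + 1 + c)" using spec[OF c, of "y+1"] by blast
      thus "f (frac y) = frac (y + (1 + c))" using fy by (simp add: algebra_simps)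
    qed
    moreover have "1 - a > 0" using a1 by simp
    ultimately show ?thesis by blast
  next
    case False
    define S where "S = {a\<in>A. a < x}"
    have Sf: "finite S" "S \<noteq> {}" using fin A0 x False unfolding S_def by auto
    define a where "a = Max S"
    have aS: "a \<in> S" unfolding a_def using Sf by simp
    have amax: "\<And>b. b \<in> A \<Longrightarrow> b < x \<Longrightarrow> b \<le> a" unfolding a_def by (rule Max_ge[OF Sf(1)]) (simp add: S_def)
    obtain c where c: "\<forall>z. a \<le> z \<and> z < 1 \<and> (\<forall>b\<in>A. a < b \<longrightarrow> z < b) \<longrightarrow> f z = frac (z + c)"
      using pc aS unfolding S_def by blast
    have "\<forall>y. x - (x - a) < y \<and> y < x \<longrightarrow> f (frac y) = frac (y + c)"
    proof (intro allI impI)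
      fix y assume y: "x - (x - a) < y \<and> y < x"
      have a0: "a \<ge> 0" using aS AX unfolding S_def by auto
      have fy: "frac y = y" using y x a0 by (simp add: frac_eq)
      have "\<forall>b\<in>A. a < b \<longrightarrow> y < b"
      proof (intro ballI impI)
        fix b assume b: "b \<in> A" "a < b"
        hence "\<not> b < x" using amax by force
        thus "y < b" using y by simp
      qed
      thus "f (frac y) = frac (y + c)" using c y x fy by auto
    qed
    moreover have "x - a > 0" using aS unfolding S_def by simp
    ultimately show ?thesis by blast
  qed
  show "LT f" unfolding LT_def
  proof (intro ballI conjI)
    fix x :: real assume x: "x \<in> {0..<1}"
    show "f x \<in> {0..<1}" by (rule bij_betw_apply[OF bij x])
    show "\<exists>\<delta>>0. \<exists>c. \<forall>y. x - \<delta> < y \<and> y < x \<longrightarrow> f (frac y) = frac (y + c)" by (rule L[OF x])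
    show "\<exists>\<delta>>0. \<exists>c. \<forall>y. x \<le> y \<and> y < x + \<delta> \<longrightarrow> f (frac y) = frac (y + c)" by (rule R[OF x])
  qed
  have "disc f \<subseteq> A"
  proof
    fix x assume xd: "x \<in> disc f"
    hence x: "x \<in> {0..<1}" and nc: "\<not> circ_cont f x" unfolding disc_def by auto
    show "x \<in> A"
    proof (rule ccontr)
      assume xA: "x \<notin> A"
      obtain a \<delta> c where a: "a \<in> A" "a \<le> x" and d: "\<delta> > 0"
        and h: "\<forall>y. a \<le> y \<and> y < x + \<delta> \<longrightarrow> y < 1 \<and> f y = frac (y + c)"
        using iet_right[OF fin A0 AX pc x] by blast
      have ax: "a < x" using a xA by (cases "a = x") auto
      have a0: "a \<ge> 0" using a AX by auto
      have fx: "f x = frac (x + c)" using h ax d by auto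
      have "circ_cont f x" unfolding circ_cont_def
      proof (intro allI impI)
        fix e :: real assume e: "e > 0"
        show "\<exists>d>0. \<forall>y. \<bar>y - x\<bar> < d \<longrightarrow> circ_dist (f (frac y)) (f x) < e"
        proof (intro exI[of _ "min (min (x - a) \<delta>) e"] conjI allI impI)
          show "min (min (x - a) \<delta>) e > 0" using ax d e by simp
          fix y assume y: "\<bar>y - x\<bar> < min (min (x - a) \<delta>) e"
          have yy: "a \<le> y \<and> y < x + \<delta>" using y by auto
          hence "y < 1 \<and> f y = frac (y + c)" using h by blast
          moreover have "frac y = y" using yy a0 \<open>y < 1 \<and> f y = frac (y + c)\<close> by (simp add: frac_eq)
          ultimately have "circ_dist (f (frac y)) (f x) = circ_dist (frac (y + c)) (frac (x + c))"
            using fx by simp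
          also have "\<dots> \<le> \<bar>(y + c) - (x + c)\<bar>" by (rule cd_ff)
          finally show "circ_dist (f (frac y)) (f x) < e" using y by simp
        qed
      qed
      thus False using nc by simp
    qed
  qed
  thus "finite (disc f)" using fin finite_subset by blast
qed



lemma inv_cont:
  assumes g: "LT g" and bij: "bij_betw g {0..<1} {0..<1}" and x: "x \<in> {0..<1}"
  shows "circ_cont (inv_into {0..<1} g) (g x) \<longleftrightarrow> circ_cont g x"
proof -
  define h where "h = inv_into {0..<1} g"
  have inj: "inj_on g {0..<1}" using bij by (rule bij_betw_imp_inj_on)
  have surj: "g ` {0..<1} = {0..<1}" using bij by (rule bij_betw_imp_surj_on)
  have hg: "\<And>u. u \<in> {0..<1} \<Longrightarrow> h (g u) = u" unfolding h_def using inj by (rule inv_into_f_f)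
  have gh: "\<And>z. z \<in> {0..<1} \<Longrightarrow> g (h z) = z" unfolding h_def using surj by (metis f_inv_into_f)
  have hX: "\<And>z. z \<in> {0..<1} \<Longrightarrow> h z \<in> {0..<1}" unfolding h_def using surj by (metis inv_into_into)
  obtain \<delta>1 c where d1: "\<delta>1 > 0" and h1: "\<forall>y. x - \<delta>1 < y \<and> y < x \<longrightarrow> g (frac y) = frac (y + c)"
    using LT_left[OF g x] by blast
  obtain \<delta>2 c' where d2: "\<delta>2 > 0" and h2: "\<forall>y. x \<le> y \<and> y < x + \<delta>2 \<longrightarrow> g (frac y) = frac (y + c')"
    using LT_right[OF g x] by blast
  have lv: "left_version g x = frac (x + c)" by (rule LV[OF x d1 h1])
  have gx: "g x = frac (x + c')" by (rule right_val[OF x d2 h2])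
  define z where "z = g x"
  have z: "z \<in> {0..<1}" unfolding z_def by (rule LT_in[OF g x])
  have hz: "h z = x" unfolding z_def using hg x by simp
  show ?thesis unfolding h_def[symmetric] z_def[symmetric]
  proof
    assume cc: "circ_cont g x"
    hence eq: "frac (x + c) = z" using cont_iff[OF g x] lv z_def by simp
    have eq': "frac (x + c') = z" using gx z_def by simp
    show "circ_cont h z" unfolding circ_cont_def
    proof (intro allI impI)
      fix e :: real assume e: "e > 0"
      show "\<exists>d>0. \<forall>w. \<bar>w - z\<bar> < d \<longrightarrow> circ_dist (h (frac w)) (h z) < e"
      proof (intro exI[of _ "min (min \<delta>1 \<delta>2) e"] conjI allI impI)
        show "min (min \<delta>1 \<delta>2) e > 0" using d1 d2 e by simp
        fix w assume w: "\<bar>w - z\<bar> < min (min \<delta>1 \<delta>2) e"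
        define y where "y = w - z + x"
        have gy: "g (frac y) = frac w"
        proof (cases "y < x")
          case True
          have "g (frac y) = frac (y + c)" using h1 True w unfolding y_def by auto
          also have "y + c = w + of_int \<lfloor>x + c\<rfloor>" using eq unfolding y_def frac_def by simp
          finally show ?thesis by simp
        next
          case False
          have "g (frac y) = frac (y + c')" using h2 False w unfolding y_def by auto
          also have "y + c' = w + of_int \<lfloor>x + c'\<rfloor>" using eq' unfolding y_def frac_def by simp
          finally show ?thesis by simp
        qed
        have "h (frac w) = frac y" using hg[OF frac_in[of y]] gy by simp
        hence "circ_dist (h (frac w)) (h z) = circ_dist y x" using hz by (simp add: cd_frac1)
        also have "\<dots> \<le> \<bar>y - x\<bar>" by (rule cd_abs)
        also have "\<dots> < e" using w unfolding y_def by simp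
        finally show "circ_dist (h (frac w)) (h z) < e" .
      qed
    qed
  next
    assume cc: "circ_cont h z"
    have "frac (x + c) = z"
    proof (rule cd_approx)
      show "frac (x + c) \<in> {0..<1}" by (rule frac_in)
      show "z \<in> {0..<1}" by (rule z)
      fix e :: real assume e: "e > 0"
      define e1 where "e1 = min (min (e/2) \<delta>1) (min \<delta>2 (1/4))"
      have e1: "e1 > 0" "e1 \<le> e/2" "e1 \<le> \<delta>1" "e1 \<le> \<delta>2" "e1 \<le> 1/4"
        using e d1 d2 unfolding e1_def by auto
      obtain d where d: "d > 0" and dd: "\<forall>y. \<bar>y - z\<bar> < d \<longrightarrow> circ_dist (h (frac y)) (h z) < e1"
        using cc e1(1) unfolding circ_cont_def by blast
      define \<epsilon> where "\<epsilon> = min (min d (e/2)) (1/4) / 2"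
      have \<epsilon>: "\<epsilon> > 0" "\<epsilon> < d" "\<epsilon> < e/2" "\<epsilon> \<le> 1/8" using d e unfolding \<epsilon>_def by auto
      define y where "y = z - \<epsilon>"
      define w where "w = h (frac y)"
      have wX: "w \<in> {0..<1}" unfolding w_def by (rule hX[OF frac_in])
      have gw: "g w = frac y" unfolding w_def by (rule gh[OF frac_in])
      have "circ_dist w x < e1" using dd \<epsilon> hz unfolding w_def y_def by simp
      then obtain k where k: "\<bar>w - x - of_int k\<bar> < e1" using cd_ex by metis
      define t where "t = w - of_int k"
      have ft: "frac t = w" unfolding t_def using wX
        by (metis frac_add_of_int_right frac_eq_id of_int_minus uminus_add_conv_diff add.commute diff_conv_add_uminus)
      have tx: "\<bar>t - x\<bar> < e1" using k unfolding t_def by simp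
      have gt: "g (frac t) = frac y" using ft gw by simp
      show "circ_dist (frac (x + c)) z < e"
      proof (cases "t < x")
        case True
        have "g (frac t) = frac (t + c)" using h1 True tx e1 by auto
        hence fy: "frac (t + c) = frac y" using gt by simp
        have "circ_dist (frac (x + c)) z \<le> circ_dist (frac (x + c)) (frac (t + c)) + circ_dist (frac (t + c)) z"
          by (rule cd_tri)
        also have "circ_dist (frac (x + c)) (frac (t + c)) \<le> \<bar>(x + c) - (t + c)\<bar>" by (rule cd_ff)
        also have "circ_dist (frac (t + c)) z = circ_dist y z" using fy by (simp add: cd_frac1)
        also have "\<dots> \<le> \<bar>y - z\<bar>" by (rule cd_abs)
        finally show ?thesis using tx e1 \<epsilon> unfolding y_def by simp
      next
        case False
        have "g (frac t) = frac (t + c')" using h2 False tx e1 by auto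
        hence "frac (t + c') = frac y" using gt by simp
        then obtain n where n: "t + c' = y + of_int n" by (rule frac_eqE)
        have "z = x + c' - of_int \<lfloor>x + c'\<rfloor>" using gx unfolding z_def frac_def by simp
        hence "t - x + \<epsilon> = of_int (n - \<lfloor>x + c'\<rfloor>)" using n unfolding y_def by simp
        moreover have "0 < t - x + \<epsilon>" "t - x + \<epsilon> < 1" using False tx e1 \<epsilon> by auto
        ultimately have "0 < n - \<lfloor>x + c'\<rfloor>" "n - \<lfloor>x + c'\<rfloor> < 1" by linarith+
        thus ?thesis by simp
      qed
    qed
    thus "circ_cont g x" using cont_iff[OF g x] lv z_def by simp
  qed
qed

lemma disc_inv:
  assumes g: "LT g" and bij: "bij_betw g {0..<1} {0..<1}"
  shows "disc (inv_into {0..<1} g) = g ` disc g"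
proof -
  have surj: "g ` {0..<1} = {0..<1}" using bij by (rule bij_betw_imp_surj_on)
  show ?thesis
  proof
    show "disc (inv_into {0..<1} g) \<subseteq> g ` disc g"
    proof
      fix z assume zd: "z \<in> disc (inv_into {0..<1} g)"
      hence z: "z \<in> {0..<1}" unfolding disc_def by simp
      then obtain x where x: "x \<in> {0..<1}" "z = g x" using surj by blast
      hence "\<not> circ_cont g x" using zd inv_cont[OF g bij x(1)] unfolding disc_def by simp
      thus "z \<in> g ` disc g" using x unfolding disc_def by blast
    qed
    show "g ` disc g \<subseteq> disc (inv_into {0..<1} g)"
    proof
      fix z assume "z \<in> g ` disc g"
      then obtain x where x: "x \<in> {0..<1}" "\<not> circ_cont g x" "z = g x" unfolding disc_def by blast
      thus "z \<in> disc (inv_into {0..<1} g)" using inv_cont[OF g bij x(1)] LT_in[OF g x(1)]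
        unfolding disc_def by simp
    qed
  qed
qed

lemma disc_cong:
  assumes "\<forall>x\<in>{0..<1}. g x = g' x"
  shows "disc g = disc g'"
proof -
  have "circ_cont g x = circ_cont g' x" if "x \<in> {0..<1}" for x
  proof -
    have "\<forall>y. g (frac y) = g' (frac y)" using assms frac_in by blast
    thus ?thesis unfolding circ_cont_def using assms that by simp
  qed
  thus ?thesis unfolding disc_def by auto
qed



locale IE =
  fixes f :: "real \<Rightarrow> real"
  assumes iet: "iet f"
begin

abbreviation "L \<equiv> left_version f"
abbreviation "Fi \<equiv> inv_into {0..<1::real} f"
abbreviation "DD \<equiv> disc f"

lemma bij: "bij_betw f {0..<1} {0..<1}" using iet unfolding iet_def by blast
lemma LTf: "LT f" using iet_LT[OF iet] by blast
lemma finD: "finite DD" using iet_LT[OF iet] by blast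
lemma injf: "inj_on f {0..<1}" using bij by (rule bij_betw_imp_inj_on)
lemma surjf: "f ` {0..<1} = {0..<1}" using bij by (rule bij_betw_imp_surj_on)
lemma fX: "x \<in> {0..<1} \<Longrightarrow> f x \<in> {0..<1}" using LT_in[OF LTf] .
lemma FiX: "x \<in> {0..<1} \<Longrightarrow> Fi x \<in> {0..<1}" using surjf by (metis inv_into_into)
lemma f_Fi: "x \<in> {0..<1} \<Longrightarrow> f (Fi x) = x" using surjf by (metis f_inv_into_f)
lemma Fi_f: "x \<in> {0..<1} \<Longrightarrow> Fi (f x) = x" using injf by (rule inv_into_f_f)
lemma LX: "x \<in> {0..<1} \<Longrightarrow> L x \<in> {0..<1}" using LV_in[OF LTf] .
lemma DX: "x \<in> DD \<Longrightarrow> x \<in> {0..<1}" unfolding disc_def by simp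
lemma inD: "x \<in> {0..<1} \<Longrightarrow> x \<in> DD \<longleftrightarrow> L x \<noteq> f x"
  unfolding disc_def using cont_iff[OF LTf] by simp
lemma contf: "x \<in> {0..<1} \<Longrightarrow> circ_cont f x \<longleftrightarrow> x \<notin> DD"
  unfolding disc_def by simp

lemma gen_powX: fixes g :: "real \<Rightarrow> real" shows "(\<And>z. z \<in> {0..<1::real} \<Longrightarrow> g z \<in> {0..<1}) \<Longrightarrow> x \<in> {0..<1} \<Longrightarrow> (g ^^ n) x \<in> {0..<1}"
proof (induction n)
  case (Suc n)
  have "(g ^^ Suc n) x = g ((g ^^ n) x)" by simp
  thus ?case using Suc by metis
qed simp
lemma powX: "x \<in> {0..<1} \<Longrightarrow> (f ^^ n) x \<in> {0..<1}"
  using gen_powX[OF fX] .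
lemma FipowX: "x \<in> {0..<1} \<Longrightarrow> (Fi ^^ n) x \<in> {0..<1}"
  using gen_powX[OF FiX] .
lemma LpowX: "x \<in> {0..<1} \<Longrightarrow> (L ^^ n) x \<in> {0..<1}"
  using gen_powX[OF LX] .

lemma f_Fi_pow: "x \<in> {0..<1} \<Longrightarrow> (f ^^ n) ((Fi ^^ n) x) = x"
proof (induction n arbitrary: x)
  case (Suc n)
  have "(f ^^ Suc n) z = (f ^^ n) (f z)" for z by (simp add: funpow_Suc_right del: funpow.simps)
  moreover have "(Fi ^^ Suc n) x = Fi ((Fi ^^ n) x)" by simp
  ultimately have "(f ^^ Suc n) ((Fi ^^ Suc n) x) = (f ^^ n) (f (Fi ((Fi ^^ n) x)))" by simp
  also have "\<dots> = x" using Suc f_Fi FipowX by simp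
  finally show ?case .
qed simp

lemma Fi_f_pow: "x \<in> {0..<1} \<Longrightarrow> (Fi ^^ n) ((f ^^ n) x) = x"
proof (induction n arbitrary: x)
  case (Suc n)
  have "(Fi ^^ Suc n) z = (Fi ^^ n) (Fi z)" for z by (simp add: funpow_Suc_right del: funpow.simps)
  moreover have "(f ^^ Suc n) x = f ((f ^^ n) x)" by simp
  ultimately have "(Fi ^^ Suc n) ((f ^^ Suc n) x) = (Fi ^^ n) (Fi (f ((f ^^ n) x)))" by simp
  also have "\<dots> = x" using Suc Fi_f powX by simp
  finally show ?case .
qed simp

lemma inj_pow: "x \<in> {0..<1} \<Longrightarrow> y \<in> {0..<1} \<Longrightarrow> (f ^^ n) x = (f ^^ n) y \<Longrightarrow> x = y"
  by (metis Fi_f_pow)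

lemma injL: assumes x1: "x1 \<in> {0..<1}" and x2: "x2 \<in> {0..<1}" and eq: "L x1 = L x2"
  shows "x1 = x2"
proof (rule ccontr)
  assume ne: "x1 \<noteq> x2"
  obtain \<delta>1 c1 where d1: "\<delta>1 > 0" and h1: "\<forall>y. x1 - \<delta>1 < y \<and> y < x1 \<longrightarrow> f (frac y) = frac (y + c1)"
    using LT_left[OF LTf x1] by blast
  obtain \<delta>2 c2 where d2: "\<delta>2 > 0" and h2: "\<forall>y. x2 - \<delta>2 < y \<and> y < x2 \<longrightarrow> f (frac y) = frac (y + c2)"
    using LT_left[OF LTf x2] by blast
  have l1: "L x1 = frac (x1 + c1)" by (rule LV[OF x1 d1 h1])
  have l2: "L x2 = frac (x2 + c2)" by (rule LV[OF x2 d2 h2])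
  define v where "v = L x1"
  define \<epsilon> where "\<epsilon> = min \<delta>1 \<delta>2 / 2"
  have \<epsilon>: "\<epsilon> > 0" "\<epsilon> < \<delta>1" "\<epsilon> < \<delta>2" using d1 d2 unfolding \<epsilon>_def by auto
  have "f (frac (x1 - \<epsilon>)) = frac (x1 - \<epsilon> + c1)" using h1 \<epsilon> by auto
  also have "x1 - \<epsilon> + c1 = (v - \<epsilon>) + of_int \<lfloor>x1 + c1\<rfloor>" using l1 unfolding v_def frac_def by simp
  finally have a: "f (frac (x1 - \<epsilon>)) = frac (v - \<epsilon>)" by simp
  have "f (frac (x2 - \<epsilon>)) = frac (x2 - \<epsilon> + c2)" using h2 \<epsilon> by auto
  also have "x2 - \<epsilon> + c2 = (v - \<epsilon>) + of_int \<lfloor>x2 + c2\<rfloor>" using l2 eq unfolding v_def frac_def by simp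
  finally have b: "f (frac (x2 - \<epsilon>)) = frac (v - \<epsilon>)" by simp
  have "frac (x1 - \<epsilon>) = frac (x2 - \<epsilon>)" using a b injf frac_in by (metis inj_onD)
  then obtain n where n: "x1 - \<epsilon> = x2 - \<epsilon> + of_int n" by (rule frac_eqE)
  hence "of_int n = x1 - x2" by simp
  hence "\<bar>of_int n\<bar> < (1::real)" using x1 x2 by auto
  hence "n = 0" by linarith
  thus False using n ne by simp
qed

lemma injLpow: "x \<in> {0..<1} \<Longrightarrow> y \<in> {0..<1} \<Longrightarrow> (L ^^ n) x = (L ^^ n) y \<Longrightarrow> x = y"
proof (induction n arbitrary: x y)
  case (Suc n)
  have "(L ^^ n) (L x) = (L ^^ n) (L y)" using Suc.prems(3)
    by (simp add: funpow_Suc_right del: funpow.simps)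
  hence "L x = L y" using Suc.IH LX Suc.prems by blast
  thus ?case using injL Suc.prems by blast
qed simp

lemma disc_pow: "disc (f ^^ n) = {x \<in> {0..<1}. (f ^^ n) x \<noteq> (L ^^ n) x}"
  unfolding disc_def using cont_iff[OF LT_pow[OF LTf, of n, THEN conjunct1]]
    LT_pow[OF LTf, of n, THEN conjunct2] by auto

lemma fund_D: "fundamental f y \<Longrightarrow> y \<in> DD"
  unfolding fundamental_def disc_np_def by simp
lemma fund_np: assumes fy: "fundamental f y" and n: "n > 0" shows "(f ^^ n) y \<noteq> y"
proof -
  have "y \<notin> per f" using fy unfolding fundamental_def disc_np_def by blast
  moreover have "y \<in> {0..<1}" using fund_D[OF fy] DX by blast
  ultimately show ?thesis using n unfolding per_def by blast
qed
lemma fund_back: assumes fy: "fundamental f y" and i: "i \<ge> 1" shows "(Fi ^^ i) y \<notin> DD"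
proof -
  have y: "y \<in> {0..<1}" using fund_D[OF fy] DX by blast
  have "circ_cont f ((Fi ^^ i) y)" using fy i unfolding fundamental_def by blast
  thus ?thesis using contf FipowX[OF y] by blast
qed

lemma FB: "fundamental f y \<Longrightarrow> (L ^^ i) ((Fi ^^ i) y) = y"
proof (induction i)
  case (Suc i)
  have y: "y \<in> {0..<1}" using fund_D[OF Suc.prems] DX by blast
  define w where "w = (Fi ^^ Suc i) y"
  have wX: "w \<in> {0..<1}" unfolding w_def using FipowX y by blast
  have "w \<notin> DD" unfolding w_def by (rule fund_back[OF Suc.prems]) simp
  hence "L w = f w" using inD wX by blast
  also have "f w = (Fi ^^ i) y" unfolding w_def using f_Fi FipowX y by simp
  finally have "(L ^^ Suc i) w = (L ^^ i) ((Fi ^^ i) y)"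
    by (simp add: funpow_Suc_right del: funpow.simps)
  thus ?case using Suc.IH Suc.prems unfolding w_def by simp
qed simp

lemma Fnp: assumes "fundamental f y" "a < b" shows "(f ^^ a) y \<noteq> (f ^^ b) y"
proof
  assume eq: "(f ^^ a) y = (f ^^ b) y"
  have y: "y \<in> {0..<1}" using fund_D[OF assms(1)] DX by blast
  have "(f ^^ b) y = (f ^^ a) ((f ^^ (b - a)) y)" using assms(2)
    by (metis funpow_add comp_apply le_add_diff_inverse less_imp_le)
  hence "(f ^^ a) ((f ^^ (b - a)) y) = (f ^^ a) y" using eq by simp
  hence "(f ^^ (b - a)) y = y" by (rule inj_pow[OF powX[OF y] y])
  thus False using fund_np[OF assms(1)] assms(2) by simp
qed

lemma Lnp: assumes "fundamental f y" "a < b" shows "(L ^^ a) y \<noteq> (L ^^ b) y"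
proof
  assume eq: "(L ^^ a) y = (L ^^ b) y"
  have y: "y \<in> {0..<1}" using fund_D[OF assms(1)] DX by blast
  define p where "p = b - a"
  have p: "p > 0" using assms(2) unfolding p_def by simp
  have "(L ^^ b) y = (L ^^ a) ((L ^^ p) y)" using assms(2) unfolding p_def
    by (metis funpow_add comp_apply le_add_diff_inverse less_imp_le)
  hence "(L ^^ a) ((L ^^ p) y) = (L ^^ a) y" using eq by simp
  hence Lp: "(L ^^ p) y = y" by (rule injLpow[OF LpowX[OF y] y])
  have "(L ^^ p) ((Fi ^^ p) y) = (L ^^ p) y" using FB[OF assms(1)] Lp by simp
  hence "(Fi ^^ p) y = y" using injLpow[OF FipowX[OF y] y] by blast
  hence "(f ^^ p) y = y" using f_Fi_pow[OF y, of p] by simp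
  thus False using fund_np[OF assms(1) p] by simp
qed

lemma fin_F: "fundamental f y \<Longrightarrow> finite {m. (f ^^ m) y \<in> DD}"
proof -
  assume fy: "fundamental f y"
  have "inj (\<lambda>m. (f ^^ m) y)" unfolding inj_def using Fnp[OF fy] by (metis linorder_neqE_nat)
  hence "finite ((\<lambda>m. (f ^^ m) y) -` DD)" using finD by (rule finite_vimageI[rotated])
  thus ?thesis by (simp add: vimage_def)
qed

lemma fin_L: "fundamental f y \<Longrightarrow> finite {m. (L ^^ m) y \<in> DD}"
proof -
  assume fy: "fundamental f y"
  have "inj (\<lambda>m. (L ^^ m) y)" unfolding inj_def using Lnp[OF fy] by (metis linorder_neqE_nat)
  hence "finite ((\<lambda>m. (L ^^ m) y) -` DD)" using finD by (rule finite_vimageI[rotated])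
  thus ?thesis by (simp add: vimage_def)
qed

lemma finFund: "finite {y. fundamental f y}"
  using finD fund_D by (metis finite_subset mem_Collect_eq subsetI)

definition "SP n0 \<longleftrightarrow> n0 > 0 \<and> (\<forall>n\<ge>n0. \<forall>x. fundamental f x \<longrightarrow>
       circ_cont f ((f ^^ n) x) \<and> circ_cont f ((left_version f ^^ n) x))"

lemma stab: "SP (stab_time f)"
proof -
  define Fu where "Fu = {y. fundamental f y}"
  define M where "M = insert 0 (\<Union>y\<in>Fu. {m. (f ^^ m) y \<in> DD} \<union> {m. (L ^^ m) y \<in> DD})"
  have finM: "finite M" unfolding M_def Fu_def using finFund fin_F fin_L by auto
  define N where "N = Suc (Max M)"
  have "SP N" unfolding SP_def
  proof (intro conjI allI impI)
    show "N > 0" unfolding N_def by simp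
    fix n x assume n: "N \<le> n" and fx: "fundamental f x"
    have x: "x \<in> {0..<1}" using fund_D[OF fx] DX by blast
    have "(f ^^ n) x \<notin> DD"
    proof
      assume "(f ^^ n) x \<in> DD"
      hence "n \<in> M" unfolding M_def Fu_def using fx by blast
      hence "n \<le> Max M" using finM by simp
      thus False using n unfolding N_def by simp
    qed
    thus "circ_cont f ((f ^^ n) x)" using contf powX x by blast
    have "(L ^^ n) x \<notin> DD"
    proof
      assume "(L ^^ n) x \<in> DD"
      hence "n \<in> M" unfolding M_def Fu_def using fx by blast
      hence "n \<le> Max M" using finM by simp
      thus False using n unfolding N_def by simp
    qed
    thus "circ_cont f ((L ^^ n) x)" using contf LpowX x by blast
  qed
  thus ?thesis unfolding stab_time_def SP_def[symmetric] by (rule LeastI)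
qed

abbreviation "n0 \<equiv> stab_time f"

lemma n0pos: "n0 > 0" using stab unfolding SP_def by blast

lemma stab2: "fundamental f x \<Longrightarrow> n \<ge> n0 \<Longrightarrow> (f ^^ n) x \<notin> DD \<and> (L ^^ n) x \<notin> DD"
  using stab unfolding SP_def using contf powX LpowX fund_D DX by meson

lemma const: assumes fy: "fundamental f y" and m: "m \<ge> n0"
  shows "(f ^^ m) y = (L ^^ m) y \<longleftrightarrow> (f ^^ n0) y = (L ^^ n0) y"
  using m
proof (induction rule: dec_induct)
  case (step m)
  have y: "y \<in> {0..<1}" using fund_D[OF fy] DX by blast
  have "(L ^^ m) y \<notin> DD" using stab2[OF fy step.hyps(1)] by blast
  hence "L ((L ^^ m) y) = f ((L ^^ m) y)" using inD LpowX[OF y] by blast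
  hence "(L ^^ Suc m) y = f ((L ^^ m) y)" by simp
  moreover have "(f ^^ Suc m) y = f ((f ^^ m) y)" by simp
  ultimately have "(f ^^ Suc m) y = (L ^^ Suc m) y \<longleftrightarrow> (f ^^ m) y = (L ^^ m) y"
    using injf powX[OF y] LpowX[OF y] by (metis inj_onD)
  thus ?case using step.IH by simp
qed simp

lemma agree: "x \<in> {0..<1} \<Longrightarrow> (\<forall>i<m. (f ^^ i) x \<notin> DD) \<Longrightarrow> (L ^^ m) x = (f ^^ m) x"
proof (induction m)
  case (Suc m)
  hence "(L ^^ m) x = (f ^^ m) x" by simp
  moreover have "L ((f ^^ m) x) = f ((f ^^ m) x)" using Suc.prems inD powX by blast
  ultimately show ?case by simp
qed simp

end



context IE
begin

abbreviation "NR \<equiv> {y. nonresolving f y}"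
abbreviation "Fu \<equiv> {y. fundamental f y}"
definition phi :: "real \<times> nat \<Rightarrow> real" where "phi = (\<lambda>(y, j). (Fi ^^ j) y)"
definition ib :: "real \<Rightarrow> nat" where "ib y = (LEAST i. i \<ge> 1 \<and> (Fi ^^ i) y \<in> DD)"
definition Bset :: "real set" where "Bset = phi ` (Sigma (DD - Fu) (\<lambda>y. {..<ib y}))"

lemma finNR: "finite NR" and finFu: "finite Fu"
  using finFund by (auto intro: finite_subset simp: nonresolving_def)

lemma finB: "finite Bset"
  unfolding Bset_def using finD by (intro finite_imageI finite_SigmaI) auto

lemma sep: assumes fy': "fundamental f y'" and yD: "y \<in> DD" and jj: "j \<le> j'"
  and eq: "(Fi ^^ j) y = (Fi ^^ j') y'"
  shows "j = j' \<and> y = y'"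
proof -
  have y: "y \<in> {0..<1}" using yD DX by blast
  have y': "y' \<in> {0..<1}" using fund_D[OF fy'] DX by blast
  define w where "w = (Fi ^^ (j' - j)) y'"
  have "(Fi ^^ j') y' = (Fi ^^ j) w" unfolding w_def using jj
    by (metis funpow_add comp_apply le_add_diff_inverse)
  hence "(f ^^ j) ((Fi ^^ j) y) = (f ^^ j) ((Fi ^^ j) w)" using eq by simp
  hence yw: "y = w" using f_Fi_pow y FipowX[OF y'] unfolding w_def by simp
  show ?thesis
  proof (cases "j' - j \<ge> 1")
    case True
    hence "w \<notin> DD" unfolding w_def by (rule fund_back[OF fy'])
    thus ?thesis using yw yD by simp
  next
    case False
    hence "j = j'" using jj by simp
    thus ?thesis using yw unfolding w_def by simp
  qed
qed

lemma phi_inj: "inj_on phi (Fu \<times> J)"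
proof (rule inj_onI)
  fix a b assume a: "a \<in> Fu \<times> J" and b: "b \<in> Fu \<times> J" and eq: "phi a = phi b"
  obtain y j where yj: "a = (y, j)" by force
  obtain y' j' where yj': "b = (y', j')" by force
  have fy: "fundamental f y" and fy': "fundamental f y'" using a b yj yj' by auto
  have e: "(Fi ^^ j) y = (Fi ^^ j') y'" using eq yj yj' unfolding phi_def by simp
  show "a = b"
  proof (cases "j \<le> j'")
    case True
    thus ?thesis using sep[OF fy' fund_D[OF fy] True e] yj yj' by simp
  next
    case False
    thus ?thesis using sep[OF fy fund_D[OF fy'] _ e[symmetric]] yj yj' by simp
  qed
qed

lemma split_pow: assumes "j \<le> n" shows "(g ^^ n) x = (g ^^ (n - j)) ((g ^^ j) x)"
  using assms by (metis funpow_add comp_apply le_add_diff_inverse2)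

lemma upper_incl:
  "disc (f ^^ n) \<subseteq> Bset \<union> phi ` (NR \<times> {..<n}) \<union> phi ` (Fu \<times> {n - n0..<n})"
proof
  fix x assume xd: "x \<in> disc (f ^^ n)"
  hence x: "x \<in> {0..<1}" and ne: "(f ^^ n) x \<noteq> (L ^^ n) x" using disc_pow by auto
  have ex: "\<exists>j. j < n \<and> (f ^^ j) x \<in> DD"
  proof (rule ccontr)
    assume "\<not> ?thesis"
    hence "(L ^^ n) x = (f ^^ n) x" using agree[OF x] by blast
    thus False using ne by simp
  qed
  define j0 where "j0 = (LEAST j. (f ^^ j) x \<in> DD)"
  have j0D: "(f ^^ j0) x \<in> DD" unfolding j0_def using ex by (metis LeastI)
  have j0n: "j0 < n" unfolding j0_def using ex by (meson Least_le le_less_trans)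
  have before: "\<forall>i<j0. (f ^^ i) x \<notin> DD" unfolding j0_def using not_less_Least by blast
  define y where "y = (f ^^ j0) x"
  have yD: "y \<in> DD" using j0D unfolding y_def .
  have xy: "x = phi (y, j0)" unfolding phi_def y_def using Fi_f_pow[OF x] by simp
  have Ly: "(L ^^ j0) x = y" unfolding y_def using agree[OF x before] .
  have fn: "(f ^^ n) x = (f ^^ (n - j0)) y" unfolding y_def using split_pow[of j0 n f x] j0n by simp
  have Ln: "(L ^^ n) x = (L ^^ (n - j0)) y" using split_pow[of j0 n L x] j0n Ly by simp
  show "x \<in> Bset \<union> phi ` (NR \<times> {..<n}) \<union> phi ` (Fu \<times> {n - n0..<n})"
  proof (cases "fundamental f y")
    case True
    show ?thesis
    proof (cases "nonresolving f y")
      case True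
      thus ?thesis using xy j0n by blast
    next
      case False
      hence r: "(f ^^ n0) y = (L ^^ n0) y" using True unfolding nonresolving_def by blast
      have "\<not> n - j0 \<ge> n0"
      proof
        assume "n - j0 \<ge> n0"
        hence "(f ^^ (n - j0)) y = (L ^^ (n - j0)) y" using const[OF True] r by blast
        thus False using fn Ln ne by simp
      qed
      hence "j0 \<in> {n - n0..<n}" using j0n by auto
      thus ?thesis using xy True by blast
    qed
  next
    case False
    have exi: "\<exists>i. i \<ge> 1 \<and> (Fi ^^ i) y \<in> DD"
    proof (cases "y \<in> per f")
      case True
      then obtain p where p: "p > 0" "(f ^^ p) y = y" unfolding per_def by blast
      have "(Fi ^^ p) y = y" using Fi_f_pow[OF DX[OF yD], of p] p by simp
      thus ?thesis using p yD by (intro exI[of _ p]) auto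
    next
      case np: False
      hence "y \<in> disc_np f" using yD unfolding disc_np_def by blast
      then obtain i where i: "i \<ge> 1" "\<not> circ_cont f ((Fi ^^ i) y)"
        using False unfolding fundamental_def by blast
      hence "(Fi ^^ i) y \<in> DD" using contf FipowX DX[OF yD] by blast
      thus ?thesis using i by blast
    qed
    have ib: "ib y \<ge> 1" "(Fi ^^ ib y) y \<in> DD" unfolding ib_def using LeastI_ex[OF exi] by auto
    have "j0 < ib y"
    proof (rule ccontr)
      assume "\<not> j0 < ib y"
      hence le: "ib y \<le> j0" by simp
      have "(f ^^ j0) x = (f ^^ ib y) ((f ^^ (j0 - ib y)) x)" using le
        by (metis funpow_add comp_apply le_add_diff_inverse)
      hence "y = (f ^^ ib y) ((f ^^ (j0 - ib y)) x)" unfolding y_def by simp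
      hence "(Fi ^^ ib y) y = (f ^^ (j0 - ib y)) x" using Fi_f_pow powX[OF x] by metis
      moreover have "j0 - ib y < j0" using ib(1) le by simp
      ultimately show False using before ib(2) by simp
    qed
    hence "x \<in> Bset" unfolding Bset_def using xy yD False by blast
    thus ?thesis by blast
  qed
qed

lemma finDn: "finite (disc (f ^^ n))"
  using upper_incl[of n] finB finNR finFu
  by (meson finite_SigmaI finite_UnI finite_imageI finite_lessThan finite_atLeastLessThan finite_subset)

lemma upper: "card (disc (f ^^ n)) \<le> card Bset + card NR * n + card Fu * n0"
proof -
  have "card (disc (f ^^ n)) \<le> card (Bset \<union> phi ` (NR \<times> {..<n}) \<union> phi ` (Fu \<times> {n - n0..<n}))"
    using upper_incl finB finNR finFu by (intro card_mono) auto
  also have "\<dots> \<le> card Bset + card (phi ` (NR \<times> {..<n})) + card (phi ` (Fu \<times> {n - n0..<n}))"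
    by (meson add_mono_thms_linordered_semiring(3) card_Un_le order_trans)
  also have "card (phi ` (NR \<times> {..<n})) \<le> card (NR \<times> {..<n})" by (rule card_image_le) (simp add: finNR)
  also have "card (NR \<times> {..<n}) = card NR * n" by (simp add: card_cartesian_product)
  also have "card (phi ` (Fu \<times> {n - n0..<n})) \<le> card (Fu \<times> {n - n0..<n})" by (rule card_image_le) (simp add: finFu)
  also have "card (Fu \<times> {n - n0..<n}) = card Fu * card {n - n0..<n}" by (simp add: card_cartesian_product)
  also have "\<dots> \<le> card Fu * n0" by (intro mult_le_mono2) simp
  finally show ?thesis by simp
qed

lemma lower: assumes n: "n0 \<le> n" shows "card NR * (n - n0 + 1) \<le> card (disc (f ^^ n))"
proof -
  have sub: "phi ` (NR \<times> {..n - n0}) \<subseteq> disc (f ^^ n)"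
  proof
    fix x assume "x \<in> phi ` (NR \<times> {..n - n0})"
    then obtain y j where yj: "nonresolving f y" "j \<le> n - n0" "x = (Fi ^^ j) y"
      unfolding phi_def by auto
    have fy: "fundamental f y" using yj(1) unfolding nonresolving_def by blast
    have y: "y \<in> {0..<1}" using fund_D[OF fy] DX by blast
    have x: "x \<in> {0..<1}" using yj(3) FipowX[OF y] by simp
    have jn: "j \<le> n" using yj(2) n by simp
    have fn: "(f ^^ n) x = (f ^^ (n - j)) y" using split_pow[OF jn, of f x] yj(3) f_Fi_pow[OF y] by simp
    have Ln: "(L ^^ n) x = (L ^^ (n - j)) y" using split_pow[OF jn, of L x] yj(3) FB[OF fy] by simp
    have "(f ^^ (n - j)) y \<noteq> (L ^^ (n - j)) y"
      using const[OF fy, of "n - j"] yj(1) yj(2) n unfolding nonresolving_def by auto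
    thus "x \<in> disc (f ^^ n)" using fn Ln x disc_pow by simp
  qed
  have "card NR * (n - n0 + 1) = card (NR \<times> {..n - n0})" by (simp add: card_cartesian_product)
  also have "\<dots> = card (phi ` (NR \<times> {..n - n0}))"
  proof (rule card_image[symmetric])
    show "inj_on phi (NR \<times> {..n - n0})"
      by (rule inj_on_subset[OF phi_inj]) (auto simp: nonresolving_def)
  qed
  also have "\<dots> \<le> card (disc (f ^^ n))" using sub finDn by (rule card_mono[rotated])
  finally show ?thesis .
qed

lemma Fi_inv: "x \<in> {0..<1} \<Longrightarrow> (Fi ^^ n) x = inv_into {0..<1} (f ^^ n) x"
proof -
  assume x: "x \<in> {0..<1}"
  have inj: "inj_on (f ^^ n) {0..<1}" using inj_pow unfolding inj_on_def by blast
  have "inv_into {0..<1} (f ^^ n) ((f ^^ n) ((Fi ^^ n) x)) = (Fi ^^ n) x"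
    using inv_into_f_f[OF inj FipowX[OF x]] .
  thus ?thesis using f_Fi_pow[OF x] by simp
qed

lemma dnum_pos: "dnum (ipow f (int n)) = card (disc (f ^^ n))"
  unfolding dnum_def ipow_def by simp

lemma dnum_neg: "dnum (ipow f (- int n)) = card (disc (f ^^ n))"
proof -
  have e: "\<forall>x\<in>{0..<1}. ipow f (- int n) x = inv_into {0..<1} (f ^^ n) x"
  proof
    fix x :: real assume x: "x \<in> {0..<1}"
    have "ipow f (- int n) x = (Fi ^^ n) x"
      unfolding ipow_def by (cases "n = 0") auto
    thus "ipow f (- int n) x = inv_into {0..<1} (f ^^ n) x" using Fi_inv[OF x] by simp
  qed
  have "disc (ipow f (- int n)) = disc (inv_into {0..<1} (f ^^ n))" by (rule disc_cong[OF e])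
  also have "\<dots> = (f ^^ n) ` disc (f ^^ n)"
    by (rule disc_inv[OF LT_pow[OF LTf, THEN conjunct1] bij_betw_funpow[OF bij]])
  finally have "dnum (ipow f (- int n)) = card ((f ^^ n) ` disc (f ^^ n))" unfolding dnum_def by simp
  also have "\<dots> = card (disc (f ^^ n))"
  proof (rule card_image)
    show "inj_on (f ^^ n) (disc (f ^^ n))"
      using inj_pow unfolding inj_on_def disc_def by blast
  qed
  finally show ?thesis .
qed

lemma dnum_int: "dnum (ipow f z) = card (disc (f ^^ nat \<bar>z\<bar>))"
proof (cases "z \<ge> 0")
  case True
  hence "z = int (nat \<bar>z\<bar>)" by simp
  thus ?thesis using dnum_pos by metis
next
  case False
  hence "z = - int (nat \<bar>z\<bar>)" by simp
  thus ?thesis using dnum_neg by metis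
qed

end

lemma lim_aux:
  fixes g :: "int \<Rightarrow> real"
  assumes ev: "\<forall>\<^sub>F z in F. \<bar>g z - k\<bar> \<le> K / \<bar>real_of_int z\<bar>"
    and big: "\<And>M. \<forall>\<^sub>F z in F. \<bar>real_of_int z\<bar> \<ge> M"
    and K: "K \<ge> 0"
  shows "(g \<longlongrightarrow> k) F"
proof (rule tendstoI)
  fix e :: real assume e: "e > 0"
  define M where "M = K / e + 1"
  have M: "M > 0" "K / M < e"
  proof -
    have "K / e \<ge> 0" using K e by simp
    thus "M > 0" unfolding M_def by linarith
    have "K < e * M" unfolding M_def using e by (simp add: algebra_simps)
    thus "K / M < e" using \<open>M > 0\<close> by (simp add: divide_less_eq)
  qed
  show "\<forall>\<^sub>F z in F. dist (g z) k < e"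
    using ev big[of M]
  proof eventually_elim
    case (elim z)
    have "K / \<bar>real_of_int z\<bar> \<le> K / M" using elim(2) M K by (intro divide_left_mono) auto
    thus ?case using elim(1) M by (simp add: dist_real_def)
  qed
qed

lemma big_top: "\<forall>\<^sub>F z in at_top. \<bar>real_of_int z\<bar> \<ge> M"
  unfolding eventually_at_top_linorder
  by (intro exI[of _ "\<lceil>M\<rceil>"]) (auto simp: ceiling_le_iff)

lemma big_bot: "\<forall>\<^sub>F z in at_bot. \<bar>real_of_int z\<bar> \<ge> M"
  unfolding eventually_at_bot_linorder
proof (intro exI[of _ "- \<lceil>M\<rceil>"] allI impI)
  fix z :: int assume "z \<le> - \<lceil>M\<rceil>"
  hence "real_of_int (- z) \<ge> M" by (metis ceiling_le_iff le_minus_iff of_int_le_iff)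
  thus "\<bar>real_of_int z\<bar> \<ge> M" by simp
qed



theorem proposition2p3:
  fixes f :: "real \<Rightarrow> real"
  assumes "iet f"
    and "\<forall>n::nat>0. \<exists>x\<in>{0..<1}. (f ^^ n) x \<noteq> x"
  shows "(\<forall>x. fundamental f x \<longrightarrow> eventually_resolving f x)
           \<noteq> (card {x. nonresolving f x} \<ge> 1)
     \<and> ((\<forall>x. fundamental f x \<longrightarrow> eventually_resolving f x) \<longrightarrow>
           (\<exists>B. \<forall>n::int. dnum (ipow f n) \<le> B))
     \<and> (card {x. nonresolving f x} \<ge> 1 \<longrightarrow>
           ((\<lambda>n::int. real (dnum (ipow f n)) / \<bar>real_of_int n\<bar>)
              \<longlongrightarrow> real (card {x. nonresolving f x})) at_top
         \<and> ((\<lambda>n::int. real (dnum (ipow f n)) / \<bar>real_of_int n\<bar>)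
              \<longlongrightarrow> real (card {x. nonresolving f x})) at_bot)"
proof -
  interpret IE f using assms(1) by unfold_locales
  define k where "k = card {x. nonresolving f x}"
  define C where "C = card Bset + card {y. fundamental f y} * n0"
  define P where "P = (\<forall>x. fundamental f x \<longrightarrow> eventually_resolving f x)"
  have up: "\<And>n. card (disc (f ^^ n)) \<le> C + k * n" using upper unfolding C_def k_def by (simp add: algebra_simps)
  have lo: "\<And>n. n0 \<le> n \<Longrightarrow> k * (n - n0 + 1) \<le> card (disc (f ^^ n))" using lower unfolding k_def by blast
  have PA: "P \<longleftrightarrow> k = 0"
  proof
    assume p: "P"
    have "{x. nonresolving f x} = {}"
      using p unfolding P_def nonresolving_def eventually_resolving_def by blast
    thus "k = 0" unfolding k_def by (metis card.empty)
  next
    assume k0: "k = 0"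
    show "P" unfolding P_def
    proof (intro allI impI)
      fix x assume fx: "fundamental f x"
      show "eventually_resolving f x"
      proof (rule ccontr)
        assume "\<not> eventually_resolving f x"
        hence "x \<in> {x. nonresolving f x}" using fx unfolding nonresolving_def eventually_resolving_def by blast
        hence "k \<noteq> 0" unfolding k_def using finNR by (metis card_0_eq empty_iff)
        thus False using k0 by simp
      qed
    qed
  qed
  define K where "K = real C + real k * real n0"
  have K0: "K \<ge> 0" unfolding K_def by simp
  have est: "\<bar>real (card (disc (f ^^ m))) / real m - real k\<bar> \<le> K / real m"
    if m: "m \<ge> n0" "m \<ge> 1" for m
  proof -
    define d where "d = real (card (disc (f ^^ m)))"
    have d1: "d \<le> real C + real k * real m" using up[of m] unfolding d_def
      by (metis of_nat_add of_nat_le_iff of_nat_mult)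
    have "real (k * (m - n0 + 1)) \<le> d" using lo[OF m(1)] unfolding d_def by (simp only: of_nat_le_iff)
    moreover have "real (m - n0 + 1) = real m - real n0 + 1" using m(1) by (simp add: of_nat_diff)
    moreover have "real (k * (m - n0 + 1)) = real k * real (m - n0 + 1)" by (rule of_nat_mult)
    ultimately have d2: "real k * (1 + (real m - real n0)) \<le> d" by simp
    have e2: "real k * (1 + (real m - real n0)) = real k + real k * real m - real k * real n0"
      by (simp add: algebra_simps)
    have nn: "0 \<le> real k * real n0" "0 \<le> real k" by simp_all
    have X: "\<bar>d - real k * real m\<bar> \<le> K" unfolding abs_le_iff K_def using d1 d2 e2 nn by linarith
    have mpos: "real m > 0" using m(2) by simp
    have Y: "d / real m - real k = (d - real k * real m) / real m" using mpos
      by (simp add: field_simps)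
    have "\<bar>d / real m - real k\<bar> = \<bar>d - real k * real m\<bar> / real m" unfolding Y abs_divide using mpos by simp
    also have "\<dots> \<le> K / real m" using X mpos by (rule divide_right_mono[OF _ less_imp_le])
    finally show ?thesis unfolding d_def .
  qed
  have est2: "\<bar>real (dnum (ipow f z)) / \<bar>real_of_int z\<bar> - real k\<bar> \<le> K / \<bar>real_of_int z\<bar>"
    if z: "\<bar>z\<bar> \<ge> int (max n0 1)" for z :: int
  proof -
    have e: "\<bar>real_of_int z\<bar> = real (nat \<bar>z\<bar>)" by simp
    have "nat \<bar>z\<bar> \<ge> n0" "nat \<bar>z\<bar> \<ge> 1" using z by auto
    hence "\<bar>real (card (disc (f ^^ nat \<bar>z\<bar>))) / real (nat \<bar>z\<bar>) - real k\<bar> \<le> K / real (nat \<bar>z\<bar>)"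
      by (rule est)
    thus ?thesis unfolding dnum_int[of z] e .
  qed
  have partC: "k \<ge> 1 \<Longrightarrow>
           ((\<lambda>n::int. real (dnum (ipow f n)) / \<bar>real_of_int n\<bar>) \<longlongrightarrow> real k) at_top
         \<and> ((\<lambda>n::int. real (dnum (ipow f n)) / \<bar>real_of_int n\<bar>) \<longlongrightarrow> real k) at_bot"
  proof (intro conjI)
    show "((\<lambda>n::int. real (dnum (ipow f n)) / \<bar>real_of_int n\<bar>) \<longlongrightarrow> real k) at_top"
    proof (rule lim_aux[OF _ big_top K0])
      show "\<forall>\<^sub>F z in at_top. \<bar>real (dnum (ipow f z)) / \<bar>real_of_int z\<bar> - real k\<bar> \<le> K / \<bar>real_of_int z\<bar>"
        unfolding eventually_at_top_linorder
      proof (intro exI[of _ "int (max n0 1)"] allI impI)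
        fix z :: int assume "int (max n0 1) \<le> z"
        hence "\<bar>z\<bar> \<ge> int (max n0 1)" by linarith
        thus "\<bar>real (dnum (ipow f z)) / \<bar>real_of_int z\<bar> - real k\<bar> \<le> K / \<bar>real_of_int z\<bar>" by (rule est2)
      qed
    qed
    show "((\<lambda>n::int. real (dnum (ipow f n)) / \<bar>real_of_int n\<bar>) \<longlongrightarrow> real k) at_bot"
    proof (rule lim_aux[OF _ big_bot K0])
      show "\<forall>\<^sub>F z in at_bot. \<bar>real (dnum (ipow f z)) / \<bar>real_of_int z\<bar> - real k\<bar> \<le> K / \<bar>real_of_int z\<bar>"
        unfolding eventually_at_bot_linorder
      proof (intro exI[of _ "- int (max n0 1)"] allI impI)
        fix z :: int assume "z \<le> - int (max n0 1)"
        hence "\<bar>z\<bar> \<ge> int (max n0 1)" by linarith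
        thus "\<bar>real (dnum (ipow f z)) / \<bar>real_of_int z\<bar> - real k\<bar> \<le> K / \<bar>real_of_int z\<bar>" by (rule est2)
      qed
    qed
  qed
  have partB: "P \<Longrightarrow> \<exists>B. \<forall>n::int. dnum (ipow f n) \<le> B"
  proof -
    assume "P"
    hence "k = 0" using PA by blast
    hence "\<forall>n::int. dnum (ipow f n) \<le> C" using up dnum_int by simp
    thus ?thesis by blast
  qed
  show ?thesis
    using PA partB partC unfolding P_def[symmetric] k_def[symmetric] by auto
qed


end
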